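(* Let $C\in(\frac{\beta u_0-1}{r},\frac{\beta u_0}{r})$ with $C>\xi_2(\beta)$. Then there exists a unique $z_g^C\in(d,\infty)$ such that the function $g_C=H_{C,z_g^C}\mathbf 1_{[d,z_g^C]}+K_{z_g^C}\mathbf 1_{(z_g^C,\infty)}$ is bounded and solves Problem 2 with $g_C(d)=C$. Moreover, the map $C\mapsto z_g^C$ is increasing and $z_g^{\xi_2(\beta)}=d$, where for $C=\xi_2(\beta)$ the quantity $z_g^C$ denotes the point $t\in[d,\infty)$ with $H_{C,t}(t)=K_t(t)$.
   Context: Fix $\mu\in\mathbb R$, $\sigma>0$, $u_0>0$, $r>0$, $\beta>0$, $d>0$. For $u\in[0,u_0]$ let $\theta_1(u)=\frac{\sqrt{(\mu-u)^2+2r\sigma^2}+(\mu-u)}{\sigma^2}$, $\theta_2(u)=\frac{\sqrt{(\mu-u)^2+2r\sigma^2}-(\mu-u)}{\sigma^2}$; write $\alpha_i=\theta_i(u_0)$, $\gamma_i=\theta_i(0)$ ($i=1,2$). Let $\xi_2(\beta)=\frac{\beta u_0-1}{r}+\frac{\beta}{\alpha_2}$. For $t\ge d$ and real $C$ define for $z\ge d$ $$H_{C,t}(z)=-\frac1r+\frac{C+\frac1r-\frac{\beta}{\gamma_2}e^{-\gamma_2(d-t)}}{e^{\gamma_1d}+\frac{\gamma_1}{\gamma_2}e^{(\gamma_1+\gamma_2)t}e^{-\gamma_2d}}\Big(e^{\gamma_1z}+\frac{\gamma_1}{\gamma_2}e^{(\gamma_1+\gamma_2)t}e^{-\gamma_2z}\Big)+\frac{\beta}{\gamma_2}e^{-\gamma_2(z-t)},$$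 $$K_t(z)=\frac{\beta u_0-1}{r}+\frac{\beta}{\alpha_2}e^{-\alpha_2(z-t)}.$$ Problem 2: a bounded twice continuously differentiable function $g$ on $[d,\infty)$ satisfying $-rg(z)-\mu g'(z)+\frac{\sigma^2}{2}g''(z)+\sup_{u\in[0,u_0]}\{(\beta+g'(z))u\}=1$ for $z\ge d$ (right derivatives at $d$). *)

theory Defs
  imports "HOL-Analysis.Analysis"
begin

definition theta1 :: "real \<Rightarrow> real \<Rightarrow> real \<Rightarrow> real \<Rightarrow> real" where
  "theta1 \<mu> \<sigma> r u = (sqrt ((\<mu> - u)\<^sup>2 + 2 * r * \<sigma>\<^sup>2) + (\<mu> - u)) / \<sigma>\<^sup>2"

definition theta2 :: "real \<Rightarrow> real \<Rightarrow> real \<Rightarrow> real \<Rightarrow> real" where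
  "theta2 \<mu> \<sigma> r u = (sqrt ((\<mu> - u)\<^sup>2 + 2 * r * \<sigma>\<^sup>2) - (\<mu> - u)) / \<sigma>\<^sup>2"

definition xi2 :: "real \<Rightarrow> real \<Rightarrow> real \<Rightarrow> real \<Rightarrow> real \<Rightarrow> real" where
  "xi2 \<mu> \<sigma> r u0 \<beta> = (\<beta> * u0 - 1) / r + \<beta> / theta2 \<mu> \<sigma> r u0"

definition Hfun :: "real \<Rightarrow> real \<Rightarrow> real \<Rightarrow> real \<Rightarrow> real \<Rightarrow> real \<Rightarrow> real \<Rightarrow> real \<Rightarrow> real" where
  "Hfun \<mu> \<sigma> r \<beta> d C t z =
     (let \<gamma>1 = theta1 \<mu> \<sigma> r 0; \<gamma>2 = theta2 \<mu> \<sigma> r 0 in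
       - 1 / r
       + (C + 1 / r - \<beta> / \<gamma>2 * exp (- \<gamma>2 * (d - t)))
         / (exp (\<gamma>1 * d) + \<gamma>1 / \<gamma>2 * exp ((\<gamma>1 + \<gamma>2) * t) * exp (- \<gamma>2 * d))
         * (exp (\<gamma>1 * z) + \<gamma>1 / \<gamma>2 * exp ((\<gamma>1 + \<gamma>2) * t) * exp (- \<gamma>2 * z))
       + \<beta> / \<gamma>2 * exp (- \<gamma>2 * (z - t)))"

definition Kfun :: "real \<Rightarrow> real \<Rightarrow> real \<Rightarrow> real \<Rightarrow> real \<Rightarrow> real \<Rightarrow> real \<Rightarrow> real" where
  "Kfun \<mu> \<sigma> r u0 \<beta> t z =
     (\<beta> * u0 - 1) / r + \<beta> / theta2 \<mu> \<sigma> r u0 * exp (- theta2 \<mu> \<sigma> r u0 * (z - t))"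

definition gfun :: "real \<Rightarrow> real \<Rightarrow> real \<Rightarrow> real \<Rightarrow> real \<Rightarrow> real \<Rightarrow> real \<Rightarrow> real \<Rightarrow> real \<Rightarrow> real" where
  "gfun \<mu> \<sigma> r u0 \<beta> d C t z =
     (if z \<le> t then Hfun \<mu> \<sigma> r \<beta> d C t z else Kfun \<mu> \<sigma> r u0 \<beta> t z)"

definition solves_problem2 ::
  "real \<Rightarrow> real \<Rightarrow> real \<Rightarrow> real \<Rightarrow> real \<Rightarrow> real \<Rightarrow> (real \<Rightarrow> real) \<Rightarrow> bool" where
  "solves_problem2 \<mu> \<sigma> r u0 \<beta> d g \<longleftrightarrow>
     bounded (g ` {d..}) \<and>
     (\<exists>g1 g2.
        (\<forall>z\<ge>d. (g has_real_derivative g1 z) (at z within {d..})) \<and>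
        (\<forall>z\<ge>d. (g1 has_real_derivative g2 z) (at z within {d..})) \<and>
        continuous_on {d..} g2 \<and>
        (\<forall>z\<ge>d. - r * g z - \<mu> * g1 z + \<sigma>\<^sup>2 / 2 * g2 z
                 + (SUP u\<in>{0..u0}. (\<beta> + g1 z) * u) = 1))"

end

theory Submission imports Defs begin


lemma sup_lin:
  fixes k u0 :: real assumes "u0 > 0"
  shows "(SUP u\<in>{0..u0}. k*u) = (if k \<le> 0 then 0 else k*u0)"
proof (cases "k \<le> 0")
  case True
  have "(SUP u\<in>{0..u0}. k*u) = k*0"
    by (rule cSup_eq_maximum) (use True assms in \<open>auto intro!: mult_nonpos_nonneg imageI simp: image_iff\<close>)
  then show ?thesis using True by simp
next
  case False
  have "(SUP u\<in>{0..u0}. k*u) = k*u0"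
    by (rule cSup_eq_maximum) (use False assms in \<open>auto intro!: mult_left_mono simp: image_iff\<close>)
  then show ?thesis using False by simp
qed

lemma piecewise_deriv:
  fixes f g f' g' :: "real \<Rightarrow> real"
  assumes f: "\<And>x. (f has_real_derivative f' x) (at x)"
    and g: "\<And>x. (g has_real_derivative g' x) (at x)"
    and ft: "f t = g t" and ft': "f' t = g' t"
  shows "((\<lambda>x. if x \<le> t then f x else g x) has_real_derivative (if x \<le> t then f' x else g' x)) (at x)"
proof -
  have eq1: "(\<lambda>x. if x \<le> t then f x else g x) = (\<lambda>x. if x \<in> {..t} then f x else g x)" by auto
  have eq2: "(if x \<le> t then f' x else g' x) = (if x \<in> {..t} then f' x else g' x)" by auto
  have cl: "closure {..t} \<inter> closure {t<..} = {t}" by auto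
  show ?thesis
    unfolding eq1 eq2 has_real_derivative_iff_has_vector_derivative
    apply (rule has_vector_derivative_If_within_closures[where T="{t<..}"])
    using f g ft ft' cl
    by (auto simp: has_real_derivative_iff_has_vector_derivative[symmetric] intro: has_field_derivative_at_within)
qed



lemma theta_facts:
  fixes \<mu> \<sigma> r u :: real assumes s: "\<sigma> > 0" and r: "r > 0"
  shows "theta1 \<mu> \<sigma> r u > 0" "theta2 \<mu> \<sigma> r u > 0"
    "\<sigma>\<^sup>2 / 2 * (theta1 \<mu> \<sigma> r u * theta2 \<mu> \<sigma> r u) = r"
    "\<sigma>\<^sup>2 / 2 * (theta1 \<mu> \<sigma> r u - theta2 \<mu> \<sigma> r u) = \<mu> - u"
proof -
  define v where "v = \<mu> - u"
  define S where "S = sqrt (v\<^sup>2 + 2 * r * \<sigma>\<^sup>2)"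
  have pos: "v\<^sup>2 + 2 * r * \<sigma>\<^sup>2 > v\<^sup>2" using s r by simp
  have SS: "S\<^sup>2 = v\<^sup>2 + 2 * r * \<sigma>\<^sup>2" unfolding S_def
    using pos by (simp add: less_imp_le[OF le_less_trans[OF zero_le_power2 pos]])
  have "S > sqrt (v\<^sup>2)" unfolding S_def using pos real_sqrt_less_mono by blast
  hence Sv: "S > \<bar>v\<bar>" by simp
  have t1: "theta1 \<mu> \<sigma> r u = (S + v) / \<sigma>\<^sup>2" unfolding theta1_def S_def v_def by simp
  have t2: "theta2 \<mu> \<sigma> r u = (S - v) / \<sigma>\<^sup>2" unfolding theta2_def S_def v_def by simp
  show "theta1 \<mu> \<sigma> r u > 0" "theta2 \<mu> \<sigma> r u > 0" unfolding t1 t2 using Sv s by auto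
  show "\<sigma>\<^sup>2 / 2 * (theta1 \<mu> \<sigma> r u * theta2 \<mu> \<sigma> r u) = r"
    unfolding t1 t2 using s SS by (simp add: field_simps power2_eq_square)
  show "\<sigma>\<^sup>2 / 2 * (theta1 \<mu> \<sigma> r u - theta2 \<mu> \<sigma> r u) = \<mu> - u"
    unfolding t1 t2 v_def using s by (simp add: field_simps)
qed



lemma exp_ineq_key:
  fixes a b k \<beta> u :: real
  assumes a: "a > 0" and b: "b > 0" and bp: "\<beta> > 0" and u: "u \<ge> 0"
    and kpos: "k * (a + b) + \<beta> * b > 0"
  shows "k * (exp (-a*u) - exp (b*u)) + \<beta> * (1 - exp (b*u)) \<le> 0"
proof -
  have e1: "exp (b*u) \<ge> 1 + b*u" by (rule exp_ge_add_one_self)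
  have e2: "exp (-a*u) \<ge> 1 - a*u" using exp_ge_add_one_self[of "-a*u"] by simp
  have e3: "exp (-a*u) \<le> 1" using a u by simp
  have e4: "exp (b*u) \<ge> 1" using b u by simp
  show ?thesis
  proof (cases "k \<ge> 0")
    case True
    have "k * (exp (-a*u) - exp (b*u)) \<le> 0" using True e3 e4 by (simp add: mult_nonneg_nonpos)
    moreover have "\<beta> * (1 - exp (b*u)) \<le> 0" using bp e4 by (simp add: mult_nonneg_nonpos)
    ultimately show ?thesis by linarith
  next
    case False
    have D: "exp (b*u) - exp (-a*u) \<ge> 0" using e3 e4 by linarith
    have kk: "-k * (a+b) < \<beta> * b" using kpos by linarith
    have conv: "b * (exp (b*u) - exp (-a*u)) \<le> (a+b) * (exp (b*u) - 1)"
    proof -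
      have "a * exp (b*u) + b * exp (-a*u) \<ge> a * (1 + b*u) + b * (1 - a*u)"
        using e1 e2 a b by (intro add_mono mult_left_mono) auto
      then show ?thesis by (simp add: algebra_simps)
    qed
    have "(-k) * (a+b) * (exp (b*u) - exp (-a*u)) \<le> \<beta> * b * (exp (b*u) - exp (-a*u))"
      using kk D by (intro mult_right_mono) auto
    also have "\<dots> \<le> \<beta> * ((a+b) * (exp (b*u) - 1))"
      using conv bp by (simp add: mult.assoc)
    finally have fin: "(-k) * (exp (b*u) - exp (-a*u)) * (a+b) \<le> \<beta> * (exp (b*u) - 1) * (a+b)"
      by (simp add: algebra_simps)
    have ab: "0 < a + b" using a b by simp
    have "(-k) * (exp (b*u) - exp (-a*u)) \<le> \<beta> * (exp (b*u) - 1)"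
      by (rule mult_right_le_imp_le[OF fin ab])
    then show ?thesis by (simp add: algebra_simps)
  qed
qed

context
  fixes \<mu> \<sigma> r u0 \<beta> d :: real
  assumes sg: "\<sigma> > 0" and u0p: "u0 > 0" and rp: "r > 0" and bp: "\<beta> > 0" and dp: "d > 0"
begin

abbreviation "ga \<equiv> theta1 \<mu> \<sigma> r 0"
abbreviation "gb \<equiv> theta2 \<mu> \<sigma> r 0"
abbreviation "al \<equiv> theta2 \<mu> \<sigma> r u0"
abbreviation "XI \<equiv> xi2 \<mu> \<sigma> r u0 \<beta>"

lemma ga_pos: "ga > 0" and gb_pos: "gb > 0" and al_pos: "al > 0"
  using theta_facts[OF sg rp] by auto

lemma ab_r: "\<sigma>\<^sup>2 / 2 * (ga * gb) = r" and ab_mu: "\<sigma>\<^sup>2 / 2 * (ga - gb) = \<mu>"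
  using theta_facts[OF sg rp, of \<mu> 0] by auto

lemma al_root: "\<sigma>\<^sup>2 / 2 * al\<^sup>2 + (\<mu> - u0) * al = r"
proof -
  have h1: "\<sigma>\<^sup>2 / 2 * (theta1 \<mu> \<sigma> r u0 * al) = r" and h2: "\<sigma>\<^sup>2 / 2 * (theta1 \<mu> \<sigma> r u0 - al) = \<mu> - u0"
    using theta_facts[OF sg rp, of \<mu> u0] by auto
  have "\<sigma>\<^sup>2 / 2 * al\<^sup>2 + (\<mu> - u0) * al = \<sigma>\<^sup>2 / 2 * al\<^sup>2 + (\<sigma>\<^sup>2 / 2 * (theta1 \<mu> \<sigma> r u0 - al)) * al"
    unfolding h2 ..
  also have "\<dots> = \<sigma>\<^sup>2 / 2 * (theta1 \<mu> \<sigma> r u0 * al)" by (simp add: algebra_simps power2_eq_square)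
  finally show ?thesis unfolding h1 .
qed

definition "Acoef C t = (C + 1 / r - \<beta> / gb * exp (- gb * (d - t)))
         / (exp (ga * d) + ga / gb * exp ((ga + gb) * t) * exp (- gb * d))"

lemma Hfun_alt: "Hfun \<mu> \<sigma> r \<beta> d C t = (\<lambda>z. - 1 / r + Acoef C t * (exp (ga * z) + ga / gb * exp ((ga + gb) * t) * exp (- gb * z))
       + \<beta> / gb * exp (- gb * (z - t)))"
  by (rule ext) (simp add: Hfun_def Acoef_def Let_def)

definition "H1 C t z = Acoef C t * (ga * exp (ga * z) - ga * exp ((ga + gb) * t) * exp (- gb * z)) - \<beta> * exp (- gb * (z - t))"
definition "H2 C t z = Acoef C t * (ga\<^sup>2 * exp (ga * z) + ga * gb * exp ((ga + gb) * t) * exp (- gb * z)) + \<beta> * gb * exp (- gb * (z - t))"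
definition "K1 t z = - \<beta> * exp (- al * (z - t))"
definition "K2 t z = \<beta> * al * exp (- al * (z - t))"

lemma H_deriv: "(Hfun \<mu> \<sigma> r \<beta> d C t has_real_derivative H1 C t z) (at z)"
  unfolding Hfun_alt using gb_pos
  by (auto intro!: derivative_eq_intros simp: H1_def algebra_simps)

lemma H1_deriv: "(H1 C t has_real_derivative H2 C t z) (at z)"
  unfolding H1_def[abs_def]
  by (auto intro!: derivative_eq_intros simp: H2_def algebra_simps power2_eq_square)

lemma K_deriv: "(Kfun \<mu> \<sigma> r u0 \<beta> t has_real_derivative K1 t z) (at z)"
  unfolding Kfun_def[abs_def]
  using al_pos by (auto intro!: derivative_eq_intros simp: K1_def algebra_simps)

lemma K1_deriv: "(K1 t has_real_derivative K2 t z) (at z)"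
  unfolding K1_def[abs_def]
  by (auto intro!: derivative_eq_intros simp: K2_def algebra_simps)

lemma H_ode: "- r * Hfun \<mu> \<sigma> r \<beta> d C t z - \<mu> * H1 C t z + \<sigma>\<^sup>2 / 2 * H2 C t z = 1"
proof -
  have "\<sigma>\<^sup>2 / 2 * ga\<^sup>2 = (\<sigma>\<^sup>2 / 2 * (ga - gb)) * ga + \<sigma>\<^sup>2 / 2 * (ga * gb)" by (simp add: algebra_simps power2_eq_square)
  hence ra: "\<sigma>\<^sup>2 / 2 * ga\<^sup>2 = \<mu> * ga + r" using ab_r ab_mu by simp
  have "\<sigma>\<^sup>2 / 2 * gb\<^sup>2 = \<sigma>\<^sup>2 / 2 * (ga * gb) - (\<sigma>\<^sup>2 / 2 * (ga - gb)) * gb" by (simp add: algebra_simps power2_eq_square)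
  hence rb: "\<sigma>\<^sup>2 / 2 * gb\<^sup>2 = r - \<mu> * gb" using ab_r ab_mu by simp
  define A where "A = Acoef C t"
  define E1 where "E1 = exp (ga * z)"
  define E2 where "E2 = exp ((ga + gb) * t) * exp (- gb * z)"
  define E3 where "E3 = exp (- gb * (z - t))"
  have "- r * Hfun \<mu> \<sigma> r \<beta> d C t z - \<mu> * H1 C t z + \<sigma>\<^sup>2 / 2 * H2 C t z
      = 1 + A * E1 * (\<sigma>\<^sup>2 / 2 * ga\<^sup>2 - \<mu> * ga - r) + (A * ga / gb * E2 + \<beta> / gb * E3) * (\<sigma>\<^sup>2 / 2 * gb\<^sup>2 + \<mu> * gb - r)"
  proof -
    have h0: "Hfun \<mu> \<sigma> r \<beta> d C t z = -1/r + A*E1 + A*(ga/gb)*E2 + \<beta>/gb*E3"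
      unfolding Hfun_alt A_def E1_def E2_def E3_def by (simp add: algebra_simps)
    have h1: "H1 C t z = A*ga*E1 - A*ga*E2 - \<beta>*E3"
      unfolding H1_def A_def E1_def E2_def E3_def by (simp add: algebra_simps)
    have h2: "H2 C t z = A*ga\<^sup>2*E1 + A*ga*gb*E2 + \<beta>*gb*E3"
      unfolding H2_def A_def E1_def E2_def E3_def by (simp add: algebra_simps)
    show ?thesis unfolding h0 h1 h2
      using rp gb_pos by (simp add: field_simps power2_eq_square)
  qed
  also have "\<dots> = 1" unfolding ra rb by simp
  finally show ?thesis .
qed

lemma K_ode: "- r * Kfun \<mu> \<sigma> r u0 \<beta> t z - \<mu> * K1 t z + \<sigma>\<^sup>2 / 2 * K2 t z + (\<beta> + K1 t z) * u0 = 1"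
proof -
  define E where "E = exp (- al * (z - t))"
  have "- r * Kfun \<mu> \<sigma> r u0 \<beta> t z - \<mu> * K1 t z + \<sigma>\<^sup>2 / 2 * K2 t z + (\<beta> + K1 t z) * u0
     = 1 + \<beta> * E / al * (\<sigma>\<^sup>2 / 2 * al\<^sup>2 + (\<mu> - u0) * al - r)"
  proof -
    have h0: "Kfun \<mu> \<sigma> r u0 \<beta> t z = (\<beta> * u0 - 1) / r + \<beta> / al * E"
      unfolding Kfun_def E_def by simp
    have h1: "K1 t z = - \<beta> * E" unfolding K1_def E_def by simp
    have h2: "K2 t z = \<beta> * al * E" unfolding K2_def E_def by simp
    show ?thesis unfolding h0 h1 h2
      using rp al_pos by (simp add: field_simps power2_eq_square)
  qed
  also have "\<dots> = 1" using al_root by simp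
  finally show ?thesis .
qed


lemma exp_tt: "exp ((ga + gb) * t) * exp (- gb * t) = exp (ga * t)"
  by (simp add: exp_add[symmetric] algebra_simps)

lemma H1_tt: "H1 C t t = - \<beta>"
  unfolding H1_def using exp_tt[of t] by (simp add: algebra_simps)

lemma K_tt: "Kfun \<mu> \<sigma> r u0 \<beta> t t = XI" "K1 t t = - \<beta>" "K2 t t = \<beta> * al"
  by (simp_all add: Kfun_def xi2_def K1_def K2_def)

lemma H_tt: "Hfun \<mu> \<sigma> r \<beta> d C t t = XI \<Longrightarrow> H2 C t t = \<beta> * al"
proof -
  assume h: "Hfun \<mu> \<sigma> r \<beta> d C t t = XI"
  have a: "- r * XI - \<mu> * (-\<beta>) + \<sigma>\<^sup>2 / 2 * H2 C t t = 1" using H_ode[of C t t] h H1_tt by simp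
  have b: "- r * XI - \<mu> * (-\<beta>) + \<sigma>\<^sup>2 / 2 * (\<beta> * al) = 1" using K_ode[of t t] K_tt by simp
  from a b have "\<sigma>\<^sup>2 / 2 * H2 C t t = \<sigma>\<^sup>2 / 2 * (\<beta> * al)" by linarith
  then show ?thesis using sg by simp
qed

lemma H2_tt_form: "H2 C t t = ga * Acoef C t * exp (ga * t) * (ga + gb) + \<beta> * gb"
  unfolding H2_def using exp_tt[of t] by (simp add: algebra_simps power2_eq_square)

lemma H1_form: "\<beta> + H1 C t z = (ga * Acoef C t * exp (ga * t)) * (exp (- ga * (t - z)) - exp (gb * (t - z))) + \<beta> * (1 - exp (gb * (t - z)))"
proof -
  have e1: "exp (ga * z) = exp (ga * t) * exp (- ga * (t - z))" by (simp add: exp_add[symmetric] algebra_simps)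
  have e2: "exp ((ga + gb) * t) * exp (- gb * z) = exp (ga * t) * exp (gb * (t - z))" by (simp add: exp_add[symmetric] algebra_simps)
  have e3: "exp (- gb * (z - t)) = exp (gb * (t - z))" by (simp add: algebra_simps)
  show ?thesis unfolding H1_def e1 e3 mult.assoc[of "ga"] e2[unfolded mult.assoc] by (simp add: algebra_simps)
qed

lemma H1_le: assumes "Hfun \<mu> \<sigma> r \<beta> d C t t = XI" "z \<le> t" shows "\<beta> + H1 C t z \<le> 0"
proof -
  have "(ga * Acoef C t * exp (ga * t)) * (ga + gb) + \<beta> * gb > 0"
    using H_tt[OF assms(1)] H2_tt_form[of C t] bp al_pos by simp
  from exp_ineq_key[OF ga_pos gb_pos bp _ this, of "t - z"] assms(2)
  show ?thesis unfolding H1_form by simp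
qed


lemma gfun_eq: "gfun \<mu> \<sigma> r u0 \<beta> d C t = (\<lambda>z. if z \<le> t then Hfun \<mu> \<sigma> r \<beta> d C t z else Kfun \<mu> \<sigma> r u0 \<beta> t z)"
  by (rule ext) (simp add: gfun_def)

lemma sufficiency:
  assumes td: "d \<le> t" and h: "Hfun \<mu> \<sigma> r \<beta> d C t t = XI"
  shows "solves_problem2 \<mu> \<sigma> r u0 \<beta> d (gfun \<mu> \<sigma> r u0 \<beta> d C t)"
proof -
  define g where "g = gfun \<mu> \<sigma> r u0 \<beta> d C t"
  define g1 where "g1 = (\<lambda>z. if z \<le> t then H1 C t z else K1 t z)"
  define g2 where "g2 = (\<lambda>z. if z \<le> t then H2 C t z else K2 t z)"
  have gd: "(g has_real_derivative g1 z) (at z)" for z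
    unfolding g_def g1_def gfun_eq
    by (rule piecewise_deriv[OF H_deriv K_deriv]) (use h K_tt H1_tt in auto)
  have g1d: "(g1 has_real_derivative g2 z) (at z)" for z
    unfolding g1_def g2_def
    by (rule piecewise_deriv[OF H1_deriv K1_deriv]) (use h K_tt H1_tt H_tt[OF h] in auto)
  have cH2: "continuous_on UNIV (H2 C t)"
    unfolding H2_def[abs_def] by (intro continuous_intros)
  have cK2: "continuous_on UNIV (K2 t)"
    unfolding K2_def[abs_def] by (intro continuous_intros)
  have "continuous_on ({..t} \<union> {t..}) g2"
    unfolding g2_def
    by (rule continuous_on_cases) (use cH2 cK2 H_tt[OF h] K_tt in \<open>auto intro: continuous_on_subset\<close>)
  moreover have "{..t} \<union> {t..} = (UNIV :: real set)" by auto
  ultimately have cg2: "continuous_on {d..} g2" by (metis continuous_on_subset subset_UNIV)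
  have hjb: "- r * g z - \<mu> * g1 z + \<sigma>\<^sup>2 / 2 * g2 z + (SUP u\<in>{0..u0}. (\<beta> + g1 z) * u) = 1" if "z \<ge> d" for z
  proof (cases "z \<le> t")
    case True
    have "(SUP u\<in>{0..u0}. (\<beta> + g1 z) * u) = 0"
      using sup_lin[OF u0p, of "\<beta> + g1 z"] H1_le[OF h True] True by (simp add: g1_def)
    then show ?thesis using H_ode[of C t z] True by (simp add: g_def g1_def g2_def gfun_def)
  next
    case False
    have "al * (z - t) \<ge> 0" using False al_pos by simp
    hence "exp (- al * (z - t)) \<le> 1" by simp
    hence "\<beta> + K1 t z \<ge> 0"
      using bp by (simp add: K1_def algebra_simps)
    hence "(SUP u\<in>{0..u0}. (\<beta> + g1 z) * u) = (\<beta> + K1 t z) * u0"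
      using sup_lin[OF u0p, of "\<beta> + g1 z"] False by (auto simp add: g1_def)
    then show ?thesis using K_ode[of t z] False by (simp add: g_def g1_def g2_def gfun_def)
  qed
  have bH: "bounded (Hfun \<mu> \<sigma> r \<beta> d C t ` {d..t})"
    by (intro compact_imp_bounded compact_continuous_image compact_Icc continuous_at_imp_continuous_on)
       (use H_deriv DERIV_isCont in blast)
  have bK: "bounded (Kfun \<mu> \<sigma> r u0 \<beta> t ` {t..})"
    unfolding bounded_iff
  proof (intro exI ballI)
    fix y assume "y \<in> Kfun \<mu> \<sigma> r u0 \<beta> t ` {t..}"
    then obtain z where z: "z \<ge> t" "y = Kfun \<mu> \<sigma> r u0 \<beta> t z" by auto
    have e: "exp (- al * (z - t)) \<le> 1" using z al_pos by simp
    have "\<bar>y\<bar> \<le> \<bar>(\<beta> * u0 - 1) / r\<bar> + \<bar>\<beta> / al * exp (- al * (z - t))\<bar>"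
      unfolding z Kfun_def by (rule abs_triangle_ineq)
    also have "\<dots> \<le> \<bar>(\<beta> * u0 - 1) / r\<bar> + \<beta> / al"
    proof -
      have e2: "\<beta> * exp (- al * (z - t)) \<le> \<beta>" using e bp by (simp add: mult_left_le)
      have "\<bar>\<beta> / al * exp (- al * (z - t))\<bar> = \<beta> * exp (- al * (z - t)) / al" using bp al_pos by simp
      also have "\<dots> \<le> \<beta> / al" using e2 al_pos by (simp add: divide_right_mono)
      finally show ?thesis by simp
    qed
    finally show "norm y \<le> \<bar>(\<beta> * u0 - 1) / r\<bar> + \<beta> / al" by simp
  qed
  have "g ` {d..} \<subseteq> Hfun \<mu> \<sigma> r \<beta> d C t ` {d..t} \<union> Kfun \<mu> \<sigma> r u0 \<beta> t ` {t..}"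
    by (auto simp: g_def gfun_def)
  hence bg: "bounded (g ` {d..})" using bH bK bounded_Un bounded_subset by metis
  show ?thesis
    unfolding solves_problem2_def g_def[symmetric]
    using bg gd g1d cg2 hjb
    by (intro conjI exI[of _ g1] exI[of _ g2]) (auto intro: has_field_derivative_at_within)
qed

lemma necessity:
  assumes td: "d < t" and s: "solves_problem2 \<mu> \<sigma> r u0 \<beta> d (gfun \<mu> \<sigma> r u0 \<beta> d C t)"
  shows "Hfun \<mu> \<sigma> r \<beta> d C t t = XI"
proof -
  define g where "g = gfun \<mu> \<sigma> r u0 \<beta> d C t"
  from s obtain g1 where "\<forall>z\<ge>d. (g has_real_derivative g1 z) (at z within {d..})"
    unfolding solves_problem2_def g_def by blast
  hence "(g has_real_derivative g1 t) (at t within {d..})" using td by simp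
  hence "continuous (at t within {d..}) g" by (rule DERIV_continuous)
  hence "(g \<longlongrightarrow> g t) (at t within {d..})" by (simp add: continuous_within)
  hence l1: "(g \<longlongrightarrow> g t) (at_right t)"
    by (rule tendsto_within_subset) (use td in auto)
  have "(Kfun \<mu> \<sigma> r u0 \<beta> t \<longlongrightarrow> Kfun \<mu> \<sigma> r u0 \<beta> t t) (at_right t)"
    using K_deriv DERIV_isCont isCont_def filterlim_at_split by blast
  moreover have "eventually (\<lambda>z. Kfun \<mu> \<sigma> r u0 \<beta> t z = g z) (at_right t)"
    by (rule eventually_at_rightI[of t "t+1"]) (auto simp: g_def gfun_def)
  ultimately have "(g \<longlongrightarrow> Kfun \<mu> \<sigma> r u0 \<beta> t t) (at_right t)" by (rule Lim_transform_eventually)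
  with l1 have "g t = Kfun \<mu> \<sigma> r u0 \<beta> t t" using tendsto_unique trivial_limit_at_right_real by blast
  then show ?thesis using K_tt by (simp add: g_def gfun_def)
qed


lemma H_at_d: "Hfun \<mu> \<sigma> r \<beta> d C t d = C"
proof -
  have D: "exp (ga * d) + ga / gb * exp ((ga + gb) * t) * exp (- gb * d) > 0"
    using ga_pos gb_pos by (intro add_pos_nonneg) auto
  define DD where "DD = exp (ga * d) + ga / gb * exp ((ga + gb) * t) * exp (- gb * d)"
  define E where "E = exp (- gb * (d - t))"
  have "Hfun \<mu> \<sigma> r \<beta> d C t d = - 1 / r + (C + 1 / r - \<beta> / gb * E) / DD * DD + \<beta> / gb * E"
    unfolding Hfun_alt Acoef_def DD_def E_def by simp
  then show ?thesis using D unfolding DD_def[symmetric] by simp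
qed

lemma XI_pos: "XI + 1 / r > 0"
proof -
  have "XI + 1 / r = \<beta> * u0 / r + \<beta> / al" unfolding xi2_def using rp by (simp add: field_simps)
  moreover have "\<beta> * u0 / r > 0" "\<beta> / al > 0" using bp u0p rp al_pos by simp_all
  ultimately show ?thesis by simp
qed

definition "Yc = XI + 1 / r - \<beta> / gb"
definition "Qc = ga / gb * (XI + 1 / r) + \<beta> / gb"
definition "phi s = Yc * exp (- ga * s) + Qc * exp (gb * s)"

lemma Qc_pos: "Qc > 0"
proof -
  have "ga / gb * (XI + 1 / r) > 0" "\<beta> / gb > 0" using XI_pos ga_pos gb_pos bp by simp_all
  then show ?thesis unfolding Qc_def by simp
qed

lemma phi0: "phi 0 = (1 + ga / gb) * (XI + 1 / r)"
  unfolding phi_def Yc_def Qc_def using gb_pos by (simp add: field_simps)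

lemma key: "Hfun \<mu> \<sigma> r \<beta> d C t t = XI \<longleftrightarrow> phi (t - d) = (1 + ga / gb) * (C + 1 / r)"
proof -
  define s where "s = t - d"
  define ea where "ea = exp (ga * s)"
  define eb where "eb = exp (gb * s)"
  define ed where "ed = exp (ga * d)"
  have pos: "ea > 0" "eb > 0" "ed > 0" unfolding ea_def eb_def ed_def by auto
  have f1: "exp (ga * t) = ed * ea" unfolding ed_def ea_def s_def by (simp add: exp_add[symmetric] algebra_simps)
  have f2: "exp (- gb * (d - t)) = eb" unfolding eb_def s_def by (simp add: algebra_simps)
  have f3: "exp ((ga + gb) * t) * exp (- gb * d) = ed * ea * eb"
    unfolding ed_def ea_def eb_def s_def by (simp add: exp_add[symmetric] algebra_simps)
  have f4: "exp (- ga * s) = 1 / ea" unfolding ea_def by (simp add: exp_minus field_simps)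
  have Ht: "Hfun \<mu> \<sigma> r \<beta> d C t t = - 1 / r + (C + 1 / r - \<beta> / gb * eb) / (ed + ga / gb * (ed * ea * eb)) * (ed * ea + ga / gb * (ed * ea)) + \<beta> / gb"
    unfolding Hfun_alt Acoef_def using exp_tt[of t] f1 f2 f3 ed_def[symmetric] by (simp add: mult.assoc)
  have den: "1 + ga / gb * ea * eb > 0" using pos ga_pos gb_pos by (intro add_pos_pos) auto
  define p where "p = ga / gb"
  define B where "B = \<beta> / gb"
  define X where "X = C + 1 / r"
  have alg: "(X - B*eb)*(1+p)*ea/(1+p*ea*eb) - Yc = ea/(1+p*ea*eb) * ((1+p)*X - (Yc*(1/ea) + (p*Yc + (1+p)*B)*eb))"
  proof -
    define N where "N = 1+p*ea*eb"
    have Npos: "N > 0" using den unfolding N_def p_def .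
    have n: "ea * ((1+p)*X - (Yc*(1/ea) + (p*Yc + (1+p)*B)*eb)) = (X - B*eb)*(1+p)*ea - Yc*N"
      unfolding N_def using pos by (simp add: field_simps)
    have "(X - B*eb)*(1+p)*ea/N - Yc = ((X - B*eb)*(1+p)*ea - Yc*N)/N"
      using Npos by (simp add: diff_divide_distrib)
    also have "\<dots> = ea/N * ((1+p)*X - (Yc*(1/ea) + (p*Yc + (1+p)*B)*eb))"
      unfolding n[symmetric] by simp
    finally show ?thesis unfolding N_def .
  qed
  have Ht2: "Hfun \<mu> \<sigma> r \<beta> d C t t - XI = (X - B*eb)*(1+p)*ea/(1+p*ea*eb) - Yc"
  proof -
    have "(ed + ga / gb * (ed * ea * eb)) = ed * (1+p*ea*eb)" unfolding p_def by (simp add: algebra_simps)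
    moreover have "(ed * ea + ga / gb * (ed * ea)) = ed * ((1+p) * ea)" unfolding p_def by (simp add: algebra_simps)
    ultimately have "Hfun \<mu> \<sigma> r \<beta> d C t t = - 1 / r + (X - B * eb) / (ed * (1+p*ea*eb)) * (ed * ((1+p) * ea)) + B"
      unfolding Ht X_def B_def by simp
    also have "\<dots> = - 1 / r + (X - B * eb) * (1+p) * ea / (1+p*ea*eb) + B"
      using pos by simp
    finally show ?thesis unfolding Yc_def B_def by simp
  qed
  have Qc': "Qc = p*Yc + (1+p)*B" unfolding Qc_def Yc_def p_def B_def by (simp add: algebra_simps)
  have iden: "Hfun \<mu> \<sigma> r \<beta> d C t t - XI = (ea / (1 + ga / gb * ea * eb)) * ((1 + ga / gb) * (C + 1 / r) - phi s)"
    unfolding Ht2 alg phi_def f4 Qc' eb_def[symmetric] p_def[symmetric] X_def[symmetric] ..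
  have fac: "ea / (1 + ga / gb * ea * eb) > 0" using pos den by simp
  show ?thesis
  proof
    assume "Hfun \<mu> \<sigma> r \<beta> d C t t = XI"
    with iden have "(ea / (1 + ga / gb * ea * eb)) * ((1 + ga / gb) * (C + 1 / r) - phi s) = 0" by simp
    hence "(1 + ga / gb) * (C + 1 / r) - phi s = 0" using fac by (metis mult_eq_0_iff less_irrefl)
    then show "phi (t - d) = (1 + ga / gb) * (C + 1 / r)" unfolding s_def by simp
  next
    assume "phi (t - d) = (1 + ga / gb) * (C + 1 / r)"
    with iden show "Hfun \<mu> \<sigma> r \<beta> d C t t = XI" unfolding s_def by simp
  qed
qed


lemma phi_deriv: "(phi has_real_derivative (- ga * Yc * exp (- ga * s) + gb * Qc * exp (gb * s))) (at s)"
  unfolding phi_def[abs_def] by (auto intro!: derivative_eq_intros simp: algebra_simps)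

lemma phi_deriv_pos: assumes "s \<ge> 0" shows "- ga * Yc * exp (- ga * s) + gb * Qc * exp (gb * s) > 0"
proof -
  have q: "gb * Qc * exp (gb * s) \<ge> gb * Qc"
  proof -
    have "exp (gb * s) \<ge> 1" using assms gb_pos by simp
    from mult_left_mono[OF this, of "gb * Qc"] show ?thesis using gb_pos Qc_pos by simp
  qed
  have gq: "gb * Qc - ga * Yc = \<beta> * (1 + ga / gb)"
    unfolding Qc_def Yc_def using gb_pos by (simp add: field_simps)
  have "1 + ga / gb > 0" using ga_pos gb_pos by (simp add: add_pos_pos)
  hence gq2: "\<beta> * (1 + ga / gb) > 0" using bp by simp
  show ?thesis
  proof (cases "Yc \<le> 0")
    case True
    have "- ga * Yc * exp (- ga * s) \<ge> 0" using True ga_pos by (simp add: mult_nonpos_nonneg mult_le_0_iff)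
    moreover have "gb * Qc * exp (gb * s) > 0" using gb_pos Qc_pos by simp
    ultimately show ?thesis by linarith
  next
    case False
    have "exp (- ga * s) \<le> 1" using assms ga_pos by simp
    hence "ga * Yc * exp (- ga * s) \<le> ga * Yc" using False ga_pos by (intro mult_left_le) auto
    then show ?thesis using q gq gq2 by linarith
  qed
qed

lemma phi_mono: assumes "0 \<le> s1" "s1 < s2" shows "phi s1 < phi s2"
  by (rule DERIV_pos_imp_increasing[OF assms(2)]) (use assms phi_deriv phi_deriv_pos in force)

lemma phi_inj: assumes "0 \<le> s1" "0 \<le> s2" "phi s1 = phi s2" shows "s1 = s2"
  using phi_mono[of s1 s2] phi_mono[of s2 s1] assms by (cases "s1 < s2"; cases "s2 < s1") auto

lemma phi_cont: "continuous_on A phi"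
  unfolding phi_def[abs_def] by (intro continuous_intros)

lemma phi_big: "\<exists>s\<ge>0. phi s \<ge> M"
proof -
  define s where "s = (\<bar>M\<bar> + \<bar>Yc\<bar>) / (Qc * gb)"
  have s0: "s \<ge> 0" unfolding s_def using Qc_pos gb_pos by simp
  have "Yc * exp (- ga * s) \<ge> - \<bar>Yc\<bar>"
  proof -
    have "\<bar>Yc * exp (- ga * s)\<bar> \<le> \<bar>Yc\<bar>" using s0 ga_pos by (simp add: abs_mult mult_left_le)
    then show ?thesis by linarith
  qed
  moreover have "Qc * exp (gb * s) \<ge> Qc * (1 + gb * s)"
    using Qc_pos exp_ge_add_one_self[of "gb * s"] by (intro mult_left_mono) auto
  moreover have "Qc * (1 + gb * s) = Qc + (\<bar>M\<bar> + \<bar>Yc\<bar>)"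
    unfolding s_def using Qc_pos gb_pos by (simp add: field_simps)
  ultimately have "phi s \<ge> M" unfolding phi_def using Qc_pos by linarith
  with s0 show ?thesis by blast
qed

lemma main_ctx:
  shows
    "(\<forall>C. (\<beta> * u0 - 1) / r < C \<and> C < \<beta> * u0 / r \<and> C > xi2 \<mu> \<sigma> r u0 \<beta> \<longrightarrow>
        (\<exists>!z. z > d \<and> solves_problem2 \<mu> \<sigma> r u0 \<beta> d (gfun \<mu> \<sigma> r u0 \<beta> d C z)
                   \<and> gfun \<mu> \<sigma> r u0 \<beta> d C z d = C))
   \<and> (\<forall>C1 C2 z1 z2.
        (\<beta> * u0 - 1) / r < C1 \<and> C1 < \<beta> * u0 / r \<and> C1 > xi2 \<mu> \<sigma> r u0 \<beta> \<and>
        (\<beta> * u0 - 1) / r < C2 \<and> C2 < \<beta> * u0 / r \<and> C2 > xi2 \<mu> \<sigma> r u0 \<beta> \<and>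
        C1 < C2 \<and>
        z1 > d \<and> solves_problem2 \<mu> \<sigma> r u0 \<beta> d (gfun \<mu> \<sigma> r u0 \<beta> d C1 z1)
               \<and> gfun \<mu> \<sigma> r u0 \<beta> d C1 z1 d = C1 \<and>
        z2 > d \<and> solves_problem2 \<mu> \<sigma> r u0 \<beta> d (gfun \<mu> \<sigma> r u0 \<beta> d C2 z2)
               \<and> gfun \<mu> \<sigma> r u0 \<beta> d C2 z2 d = C2
        \<longrightarrow> z1 < z2)
   \<and> {t. t \<ge> d \<and> Hfun \<mu> \<sigma> r \<beta> d (xi2 \<mu> \<sigma> r u0 \<beta>) t t = Kfun \<mu> \<sigma> r u0 \<beta> t t} = {d}"
proof (intro conjI allI impI)
  have p1: "1 + ga / gb > 0" using ga_pos gb_pos by (simp add: add_pos_pos)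
  fix C assume hC: "(\<beta> * u0 - 1) / r < C \<and> C < \<beta> * u0 / r \<and> C > XI"
  define y where "y = (1 + ga / gb) * (C + 1 / r)"
  have y0: "phi 0 < y" unfolding phi0 y_def using hC p1 by simp
  obtain s1 where s1: "s1 \<ge> 0" "phi s1 \<ge> y" using phi_big by blast
  obtain s where s: "0 \<le> s" "s \<le> s1" "phi s = y"
    using IVT'[of phi 0 y s1] y0 s1 phi_cont by force
  have sp: "s > 0" using s y0 by (cases "s = 0") auto
  have sol: "Hfun \<mu> \<sigma> r \<beta> d C (d + s) (d + s) = XI" using key[of C "d + s"] s(3) unfolding y_def by simp
  show "\<exists>!z. z > d \<and> solves_problem2 \<mu> \<sigma> r u0 \<beta> d (gfun \<mu> \<sigma> r u0 \<beta> d C z)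
                   \<and> gfun \<mu> \<sigma> r u0 \<beta> d C z d = C"
  proof (rule ex1I[of _ "d + s"])
    show "d + s > d \<and> solves_problem2 \<mu> \<sigma> r u0 \<beta> d (gfun \<mu> \<sigma> r u0 \<beta> d C (d + s))
                   \<and> gfun \<mu> \<sigma> r u0 \<beta> d C (d + s) d = C"
      using sp sufficiency[OF _ sol] H_at_d[of C "d + s"] by (simp add: gfun_def)
  next
    fix z assume z: "z > d \<and> solves_problem2 \<mu> \<sigma> r u0 \<beta> d (gfun \<mu> \<sigma> r u0 \<beta> d C z)
                   \<and> gfun \<mu> \<sigma> r u0 \<beta> d C z d = C"
    have "phi (z - d) = y" using necessity[of z C] z key[of C z] unfolding y_def by simp
    hence "z - d = s" using phi_inj[of "z - d" s] z s by simp
    then show "z = d + s" by simp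
  qed
next
  have p1: "1 + ga / gb > 0" using ga_pos gb_pos by (simp add: add_pos_pos)
  fix C1 C2 z1 z2
  assume h: "(\<beta> * u0 - 1) / r < C1 \<and> C1 < \<beta> * u0 / r \<and> C1 > XI \<and>
        (\<beta> * u0 - 1) / r < C2 \<and> C2 < \<beta> * u0 / r \<and> C2 > XI \<and>
        C1 < C2 \<and>
        z1 > d \<and> solves_problem2 \<mu> \<sigma> r u0 \<beta> d (gfun \<mu> \<sigma> r u0 \<beta> d C1 z1)
               \<and> gfun \<mu> \<sigma> r u0 \<beta> d C1 z1 d = C1 \<and>
        z2 > d \<and> solves_problem2 \<mu> \<sigma> r u0 \<beta> d (gfun \<mu> \<sigma> r u0 \<beta> d C2 z2)
               \<and> gfun \<mu> \<sigma> r u0 \<beta> d C2 z2 d = C2"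
  have e1: "phi (z1 - d) = (1 + ga / gb) * (C1 + 1 / r)" using necessity[of z1 C1] h key[of C1 z1] by simp
  have e2: "phi (z2 - d) = (1 + ga / gb) * (C2 + 1 / r)" using necessity[of z2 C2] h key[of C2 z2] by simp
  have lt: "phi (z1 - d) < phi (z2 - d)" unfolding e1 e2 using h p1 by simp
  show "z1 < z2"
  proof (rule ccontr)
    assume "\<not> z1 < z2"
    hence "z2 - d \<le> z1 - d" by simp
    moreover have "z2 - d \<ge> 0" using h by simp
    ultimately have "phi (z2 - d) \<le> phi (z1 - d)"
      using phi_mono[of "z2 - d" "z1 - d"] by (cases "z2 - d = z1 - d") auto
    with lt show False by simp
  qed
next
  show "{t. t \<ge> d \<and> Hfun \<mu> \<sigma> r \<beta> d XI t t = Kfun \<mu> \<sigma> r u0 \<beta> t t} = {d}"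
  proof (intro set_eqI iffI)
    fix t assume "t \<in> {t. t \<ge> d \<and> Hfun \<mu> \<sigma> r \<beta> d XI t t = Kfun \<mu> \<sigma> r u0 \<beta> t t}"
    hence t: "t \<ge> d" "Hfun \<mu> \<sigma> r \<beta> d XI t t = XI" using K_tt by auto
    have "phi (t - d) = phi 0" using key[of XI t] t phi0 by simp
    hence "t - d = 0" using phi_inj[of "t - d" 0] t by simp
    then show "t \<in> {d}" by simp
  next
    fix t assume "t \<in> {d}"
    then show "t \<in> {t. t \<ge> d \<and> Hfun \<mu> \<sigma> r \<beta> d XI t t = Kfun \<mu> \<sigma> r u0 \<beta> t t}"
      using H_at_d[of XI d] K_tt by simp
  qed
qed

end

theorem proposition4p6:
  fixes \<mu> \<sigma> u0 r \<beta> d :: real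
  assumes "\<sigma> > 0" and "u0 > 0" and "r > 0" and "\<beta> > 0" and "d > 0"
  shows
    "(\<forall>C. (\<beta> * u0 - 1) / r < C \<and> C < \<beta> * u0 / r \<and> C > xi2 \<mu> \<sigma> r u0 \<beta> \<longrightarrow>
        (\<exists>!z. z > d \<and> solves_problem2 \<mu> \<sigma> r u0 \<beta> d (gfun \<mu> \<sigma> r u0 \<beta> d C z)
                   \<and> gfun \<mu> \<sigma> r u0 \<beta> d C z d = C))
   \<and> (\<forall>C1 C2 z1 z2.
        (\<beta> * u0 - 1) / r < C1 \<and> C1 < \<beta> * u0 / r \<and> C1 > xi2 \<mu> \<sigma> r u0 \<beta> \<and>
        (\<beta> * u0 - 1) / r < C2 \<and> C2 < \<beta> * u0 / r \<and> C2 > xi2 \<mu> \<sigma> r u0 \<beta> \<and>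
        C1 < C2 \<and>
        z1 > d \<and> solves_problem2 \<mu> \<sigma> r u0 \<beta> d (gfun \<mu> \<sigma> r u0 \<beta> d C1 z1)
               \<and> gfun \<mu> \<sigma> r u0 \<beta> d C1 z1 d = C1 \<and>
        z2 > d \<and> solves_problem2 \<mu> \<sigma> r u0 \<beta> d (gfun \<mu> \<sigma> r u0 \<beta> d C2 z2)
               \<and> gfun \<mu> \<sigma> r u0 \<beta> d C2 z2 d = C2
        \<longrightarrow> z1 < z2)
   \<and> {t. t \<ge> d \<and> Hfun \<mu> \<sigma> r \<beta> d (xi2 \<mu> \<sigma> r u0 \<beta>) t t = Kfun \<mu> \<sigma> r u0 \<beta> t t} = {d}"
  by (rule main_ctx[OF assms])

end
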